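(* Let $S$ be a 2-manifold diffeomorphic to the 2-torus. Then: (1) if $\omega_0$ is a nowhere-vanishing closed 1-form on $S$, then $[\omega_0]\ne0$ in $H^1_{\mathrm{dR}}(S)$; (2) let $X$ be a vector field on $S$ that is nonzero on a dense subset, let $\gamma_1,\gamma_2$ generate $H_1(S;\mathbb{Z})$, and let $\omega,\eta$ be closed 1-forms with $[\omega]\ne0\ne[\eta]$ and $\omega(X)=0=\eta(X)$; setting $\omega_i=\int_{\gamma_i}\omega$, $\eta_i=\int_{\gamma_i}\eta$, we have $(-\omega_2,\omega_1)\ne0\ne(-\eta_2,\eta_1)$ and $[(-\omega_2,\omega_1)]=[(-\eta_2,\eta_1)]$ in $\mathbb{P}(\mathbb{R})$; (3) with the same data, if $\tilde\gamma_1,\tilde\gamma_2$ also generate $H_1(S;\mathbb{Z})$ and $\tilde\eta_i=\int_{\tilde\gamma_i}\eta$, then $(-\omega_2,\omega_1)$ is Diophantine if and only if $(-\tilde\eta_2,\tilde\eta_1)$ is Diophantine.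
   Context: $\mathbb{P}(\mathbb{R}) = (\mathbb{R}^2\setminus\{0\})/\sim$ with $u\sim v$ iff $u,v$ are linearly dependent. A vector $v\in\mathbb{R}^2$ is Diophantine if there are $\gamma>0,\tau>1$ with $|\langle v,k\rangle|\ge\gamma\|k\|^{-\tau}$ for all $k\in\mathbb{Z}^2\setminus\{0\}$. *)

theory Defs
  imports "HOL-Analysis.Analysis"
begin

text \<open>The 2-torus T = R^2/Z^2 is modelled by Z^2-periodic objects on R^2 (points are pairs).\<close>

type_synonym pt = "real \<times> real"

definition periodic :: "(pt \<Rightarrow> 'a) \<Rightarrow> bool" where
  "periodic f \<longleftrightarrow> (\<forall>x y. \<forall>m n :: int. f (x + of_int m, y + of_int n) = f (x, y))"

fun Ck :: "nat \<Rightarrow> (pt \<Rightarrow> real) \<Rightarrow> bool" where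
  "Ck 0 f = continuous_on UNIV f"
| "Ck (Suc n) f = ((\<forall>p. f differentiable (at p)) \<and>
                    (\<forall>v. Ck n (\<lambda>p. frechet_derivative f (at p) v)))"

definition smooth_fun :: "(pt \<Rightarrow> real) \<Rightarrow> bool" where
  "smooth_fun f \<longleftrightarrow> (\<forall>n. Ck n f)"

definition pdx :: "(pt \<Rightarrow> real) \<Rightarrow> pt \<Rightarrow> real" where
  "pdx f p = frechet_derivative f (at p) (1, 0)"

definition pdy :: "(pt \<Rightarrow> real) \<Rightarrow> pt \<Rightarrow> real" where
  "pdy f p = frechet_derivative f (at p) (0, 1)"

text \<open>A smooth 1-form P dx + Q dy on the torus, stored as p \<mapsto> (P p, Q p);
  a smooth vector field on the torus is stored the same way.\<close>
definition smooth_field :: "(pt \<Rightarrow> real \<times> real) \<Rightarrow> bool" where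
  "smooth_field w \<longleftrightarrow> periodic w \<and> smooth_fun (\<lambda>p. fst (w p)) \<and> smooth_fun (\<lambda>p. snd (w p))"

definition closed_form :: "(pt \<Rightarrow> real \<times> real) \<Rightarrow> bool" where
  "closed_form w \<longleftrightarrow> smooth_field w \<and>
     (\<forall>p. pdy (\<lambda>q. fst (w q)) p = pdx (\<lambda>q. snd (w q)) p)"

definition exact_form :: "(pt \<Rightarrow> real \<times> real) \<Rightarrow> bool" where
  "exact_form w \<longleftrightarrow> (\<exists>f. periodic f \<and> smooth_fun f \<and>
     (\<forall>p. pdx f p = fst (w p) \<and> pdy f p = snd (w p)))"

definition annihilates :: "(pt \<Rightarrow> real \<times> real) \<Rightarrow> (pt \<Rightarrow> real \<times> real) \<Rightarrow> bool" where
  "annihilates w X \<longleftrightarrow> (\<forall>p. fst (w p) * fst (X p) + snd (w p) * snd (X p) = 0)"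

text \<open>H_1(T;Z) = Z^2: a class is given by the integer displacement (m,n) of a lift of a loop.
  The integral of a closed 1-form over the class (m,n) is the integral along the
  straight lift from 0 to (m,n).\<close>
definition period :: "(pt \<Rightarrow> real \<times> real) \<Rightarrow> int \<times> int \<Rightarrow> real" where
  "period w k = integral {0..1} (\<lambda>t.
      fst (w (t * of_int (fst k), t * of_int (snd k))) * of_int (fst k) +
      snd (w (t * of_int (fst k), t * of_int (snd k))) * of_int (snd k))"

text \<open>Two classes generate H_1(T;Z) = Z^2 iff they form a Z-basis, i.e. determinant \<plusminus>1.\<close>
definition hom_generators :: "int \<times> int \<Rightarrow> int \<times> int \<Rightarrow> bool" where
  "hom_generators a b \<longleftrightarrow> \<bar>fst a * snd b - snd a * fst b\<bar> = 1"

definition proj_eq :: "real \<times> real \<Rightarrow> real \<times> real \<Rightarrow> bool" where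
  "proj_eq u v \<longleftrightarrow> u \<noteq> 0 \<and> v \<noteq> 0 \<and> (\<exists>c. u = c *\<^sub>R v)"

definition diophantine :: "real \<times> real \<Rightarrow> bool" where
  "diophantine v \<longleftrightarrow> (\<exists>\<gamma>>0. \<exists>\<tau>>1. \<forall>k1 k2 :: int. (k1, k2) \<noteq> (0, 0) \<longrightarrow>
      \<bar>fst v * of_int k1 + snd v * of_int k2\<bar> \<ge> \<gamma> * norm (real_of_int k1, real_of_int k2) powr (-\<tau>))"

end

theory Submission
  imports Defs
begin

lemma smooth_Ck: "smooth_fun f \<Longrightarrow> Ck n f" by (simp add: smooth_fun_def)

lemma smooth_cont: "smooth_fun f \<Longrightarrow> continuous_on UNIV f"
  using smooth_Ck[of f 0] by simp

lemma smooth_has_deriv: "smooth_fun f \<Longrightarrow> (f has_derivative frechet_derivative f (at p)) (at p)"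
  using smooth_Ck[of f 1] by (simp add: frechet_derivative_works) (metis prod.collapse)

lemma smooth_dir: "smooth_fun f \<Longrightarrow> smooth_fun (\<lambda>p. frechet_derivative f (at p) v)"
  unfolding smooth_fun_def proof
  fix n assume "\<forall>n. Ck n f" then have "Ck (Suc n) f" by blast
  then show "Ck n (\<lambda>p. frechet_derivative f (at p) v)" by simp (metis prod.collapse)
qed

lemma lin_decomp:
  fixes L :: "real \<times> real \<Rightarrow> real"
  assumes "linear L"
  shows "L v = fst v * L (1,0) + snd v * L (0,1)"
proof -
  have "v = fst v *\<^sub>R (1,0) + snd v *\<^sub>R (0::real,1::real)" by (simp add: prod_eq_iff)
  then have "L v = L (fst v *\<^sub>R (1,0) + snd v *\<^sub>R (0::real,1::real))" by simp
  also have "\<dots> = fst v * L (1,0) + snd v * L (0,1)"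
    by (simp only: linear_add[OF assms] linear_scale[OF assms]) simp
  finally show ?thesis .
qed

lemma fd_decomp:
  assumes "smooth_fun f"
  shows "frechet_derivative f (at p) v = fst v * pdx f p + snd v * pdy f p"
  unfolding pdx_def pdy_def
  by (rule lin_decomp) (rule has_derivative_linear[OF smooth_has_deriv[OF assms]])

lemma Ck_affine:
  "Ck n f \<Longrightarrow> Ck n g \<Longrightarrow> Ck n (\<lambda>p. a * f p + b * g p + e)"
proof (induction n arbitrary: f g e)
  case 0
  then show ?case by (auto intro!: continuous_intros)
next
  case (Suc n)
  from Suc.prems have df: "\<And>p. (f has_derivative frechet_derivative f (at p)) (at p)"
    and dg: "\<And>p. (g has_derivative frechet_derivative g (at p)) (at p)"
    by (auto simp: frechet_derivative_works)
  have D: "((\<lambda>p. a * f p + b * g p + e) has_derivative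
      (\<lambda>v. a * frechet_derivative f (at p) v + b * frechet_derivative g (at p) v)) (at p)" for p
    by (auto intro!: derivative_eq_intros df dg)
  have E: "frechet_derivative (\<lambda>p. a * f p + b * g p + e) (at p) v =
     a * frechet_derivative f (at p) v + b * frechet_derivative g (at p) v + 0" for p v
    unfolding frechet_derivative_at[OF D[of p], symmetric] by simp
  have "Ck n (\<lambda>p. frechet_derivative (\<lambda>p. a * f p + b * g p + e) (at p) v)" for v
  proof -
    have "Ck n (\<lambda>p. frechet_derivative f (at p) v)" "Ck n (\<lambda>p. frechet_derivative g (at p) v)"
      using Suc.prems by simp_all (metis prod.collapse)+
    then show ?thesis unfolding E by (rule Suc.IH)
  qed
  then show ?case using D by (auto simp: differentiable_def) blast
qed

lemma periodic_max:
  fixes f :: "pt \<Rightarrow> real"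
  assumes "periodic f" "continuous_on UNIV f"
  obtains p where "\<And>q. f q \<le> f p"
proof -
  have "compact (cbox (0,0) (1::real,1::real))" by simp
  then obtain p where p: "p \<in> cbox (0,0) (1,1)" "\<And>q. q \<in> cbox (0,0) (1,1) \<Longrightarrow> f q \<le> f p"
    using continuous_attains_sup[of "cbox (0,0) (1::real,1::real)" f] assms(2)
    by (metis cbox_Pair_eq continuous_on_subset empty_iff subset_UNIV atLeastAtMost_iff
        box_real(2) mem_Sigma_iff order.refl zero_le_one)
  have "f q \<le> f p" for q
  proof -
    obtain x y where q: "q = (x,y)" by force
    let ?x = "x - of_int \<lfloor>x\<rfloor>" and ?y = "y - of_int \<lfloor>y\<rfloor>"
    have "f (?x + of_int \<lfloor>x\<rfloor>, ?y + of_int \<lfloor>y\<rfloor>) = f (?x, ?y)"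
      using assms(1) unfolding periodic_def by blast
    then have "f q = f (?x, ?y)" by (simp add: q)
    also have "\<dots> \<le> f p"
      apply (rule p(2))
      by (simp add: cbox_Pair_eq) linarith
    finally show ?thesis .
  qed
  then show ?thesis using that by blast
qed

lemma part1:
  assumes "closed_form w" "\<forall>p. w p \<noteq> 0"
  shows "\<not> exact_form w"
proof
  assume "exact_form w"
  then obtain f where f: "periodic f" "smooth_fun f" "\<And>p. pdx f p = fst (w p) \<and> pdy f p = snd (w p)"
    unfolding exact_form_def by blast
  obtain p where p: "\<And>q. f q \<le> f p" using periodic_max[OF f(1) smooth_cont[OF f(2)]] by blast
  have "frechet_derivative f (at p) = (\<lambda>h. 0)"
    by (rule has_derivative_local_max[OF smooth_has_deriv[OF f(2)]]) (simp add: p)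
  then have "w p = 0" using f(3)[of p] by (simp add: pdx_def pdy_def prod_eq_iff)
  then show False using assms(2) by blast
qed

lemma smooth_has_deriv2:
  assumes "smooth_fun P"
  shows "(P has_derivative (\<lambda>v. fst v * pdx P q + snd v * pdy P q)) (at q)"
proof -
  have "frechet_derivative P (at q) = (\<lambda>v. fst v * pdx P q + snd v * pdy P q)"
    using fd_decomp[OF assms] by (intro ext) simp
  then show ?thesis using smooth_has_deriv[OF assms, of q] by simp
qed

lemma smooth_pdx_cont: "smooth_fun P \<Longrightarrow> continuous_on UNIV (pdx P)"
  unfolding pdx_def by (rule smooth_cont[OF smooth_dir])
lemma smooth_pdy_cont: "smooth_fun P \<Longrightarrow> continuous_on UNIV (pdy P)"
  unfolding pdy_def by (rule smooth_cont[OF smooth_dir])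

lemma scale_comp:
  assumes "\<And>q. (P has_derivative (\<lambda>v. fst v * Px q + snd v * Py q)) (at q)"
  shows "((\<lambda>p. P (t *\<^sub>R p)) has_derivative
          (\<lambda>v. t * (fst v * Px (t *\<^sub>R p) + snd v * Py (t *\<^sub>R p)))) (at p within S)"
proof -
  have "((\<lambda>p. t *\<^sub>R p) has_derivative (\<lambda>v. t *\<^sub>R v)) (at p within S)"
    by (auto intro!: derivative_eq_intros)
  from has_derivative_compose[OF this assms]
  show ?thesis by (simp add: algebra_simps)
qed

lemma line_comp:
  assumes "\<And>q. (P has_derivative (\<lambda>v. fst v * Px q + snd v * Py q)) (at q)"
  shows "((\<lambda>t. P (t *\<^sub>R p)) has_derivative
          (\<lambda>h. h * (fst p * Px (t *\<^sub>R p) + snd p * Py (t *\<^sub>R p)))) (at t within S)"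
proof -
  have "((\<lambda>t. t *\<^sub>R p) has_derivative (\<lambda>h. h *\<^sub>R p)) (at t within S)"
    by (auto intro!: derivative_eq_intros)
  from has_derivative_compose[OF this assms]
  show ?thesis by (simp add: algebra_simps)
qed

lemma cont_scale2: "continuous_on UNIV h \<Longrightarrow> continuous_on S (\<lambda>z::pt\<times>real. h (snd z *\<^sub>R fst z))"
  by (rule continuous_on_compose2[of UNIV h]) (auto intro!: continuous_intros)

lemma cont_scale1: "continuous_on UNIV h \<Longrightarrow> continuous_on S (\<lambda>t::real. h (t *\<^sub>R (p::pt)))"
  by (rule continuous_on_compose2[of UNIV h]) (auto intro!: continuous_intros)

lemma bl2: "bounded_linear (\<lambda>v::pt. fst v * a + snd v * b)"
  unfolding linear_conv_bounded_linear[symmetric] by (rule linearI) (auto simp: algebra_simps)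

definition Fp :: "(pt \<Rightarrow> real \<times> real) \<Rightarrow> pt \<Rightarrow> real" where
  "Fp w p = integral {0..1} (\<lambda>t. fst p * fst (w (t *\<^sub>R p)) + snd p * snd (w (t *\<^sub>R p)))"

lemma Basis_pt: "(Basis :: pt set) = {(1,0), (0,1)}"
  by (auto simp: Basis_prod_def)

lemma Fp_deriv:
  assumes "closed_form w"
  shows "(Fp w has_derivative (\<lambda>v. fst v * fst (w p) + snd v * snd (w p))) (at p)"
proof -
  define P where "P = (\<lambda>q. fst (w q))"
  define Q where "Q = (\<lambda>q. snd (w q))"
  have sP: "smooth_fun P" and sQ: "smooth_fun Q" and cl: "\<And>q. pdy P q = pdx Q q"
    using assms by (auto simp: closed_form_def smooth_field_def P_def Q_def)
  note dP = smooth_has_deriv2[OF sP] and dQ = smooth_has_deriv2[OF sQ]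
  note cts = smooth_cont[OF sP] smooth_cont[OF sQ] smooth_pdx_cont[OF sP] smooth_pdx_cont[OF sQ]
      smooth_pdy_cont[OF sP] smooth_pdy_cont[OF sQ]
  define A where "A = (\<lambda>p t. P (t *\<^sub>R p) + t * (fst p * pdx P (t *\<^sub>R p) + snd p * pdx Q (t *\<^sub>R p)))"
  define B where "B = (\<lambda>p t. Q (t *\<^sub>R p) + t * (fst p * pdy P (t *\<^sub>R p) + snd p * pdy Q (t *\<^sub>R p)))"
  define fx where "fx = (\<lambda>p t. Blinfun (\<lambda>v. fst v * A p t + snd v * B p t))"
  define f where "f = (\<lambda>p t. fst p * P (t *\<^sub>R p) + snd p * Q (t *\<^sub>R p))"
  have fxa: "blinfun_apply (fx p t) v = fst v * A p t + snd v * B p t" for p t v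
    by (simp add: fx_def bounded_linear_Blinfun_apply bl2)
  have der: "((\<lambda>p. f p t) has_derivative blinfun_apply (fx p t)) (at p within UNIV)" for p t
  proof -
    have "((\<lambda>p. f p t) has_derivative (\<lambda>v. fst p * (t * (fst v * pdx P (t *\<^sub>R p) + snd v * pdy P (t *\<^sub>R p))) + fst v * P (t *\<^sub>R p)
       + (snd p * (t * (fst v * pdx Q (t *\<^sub>R p) + snd v * pdy Q (t *\<^sub>R p))) + snd v * Q (t *\<^sub>R p)))) (at p within UNIV)"
      unfolding f_def
      by (intro has_derivative_add has_derivative_mult has_derivative_fst has_derivative_snd has_derivative_ident
           scale_comp[OF dP] scale_comp[OF dQ])
    then show ?thesis
      by (rule has_derivative_eq_rhs) (auto simp: fxa A_def B_def algebra_simps)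
  qed
  have cA: "continuous_on S (\<lambda>z. A (fst z) (snd z))" for S
    unfolding A_def by (intro continuous_intros cont_scale2 cts)
  have cB: "continuous_on S (\<lambda>z. B (fst z) (snd z))" for S
    unfolding B_def by (intro continuous_intros cont_scale2 cts)
  have cont: "continuous_on (UNIV \<times> cbox 0 1) (\<lambda>(p, t). fx p t)"
    apply (rule continuous_on_blinfun_componentwise)
    using cA cB by (auto simp: Basis_pt fxa split_beta')
  have cA1: "continuous_on S (\<lambda>t. A p t)" for S p
    unfolding A_def by (intro continuous_intros cont_scale1 cts)
  have cB1: "continuous_on S (\<lambda>t. B p t)" for S p
    unfolding B_def by (intro continuous_intros cont_scale1 cts)
  have cfx1: "continuous_on S (fx p)" for S
    apply (rule continuous_on_blinfun_componentwise)
    by (auto simp: Basis_pt fxa intro: cA1 cB1)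
  have intf: "f p integrable_on cbox 0 1" for p
    unfolding f_def by (intro integrable_continuous continuous_intros cont_scale1 cts)
  have L: "((\<lambda>p. integral (cbox 0 1) (f p)) has_derivative integral (cbox 0 1) (fx p)) (at p within UNIV)"
    by (rule leibniz_rule[OF der intf cont]) auto
  have iA: "(A p has_integral P p) {0..1}"
  proof -
    have "(A p has_integral (1 * P (1 *\<^sub>R p) - 0 * P (0 *\<^sub>R p))) {0..1}"
    proof (rule fundamental_theorem_of_calculus)
      fix t :: real
      have "((\<lambda>t. t * P (t *\<^sub>R p)) has_derivative (\<lambda>h. t * (h * (fst p * pdx P (t *\<^sub>R p) + snd p * pdy P (t *\<^sub>R p))) + h * P (t *\<^sub>R p))) (at t within {0..1})"
        by (intro has_derivative_mult has_derivative_ident line_comp[OF dP])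
      then show "((\<lambda>t. t * P (t *\<^sub>R p)) has_vector_derivative A p t) (at t within {0..1})"
        unfolding has_vector_derivative_def
        by (rule has_derivative_eq_rhs) (auto simp: A_def algebra_simps cl)
    qed simp
    then show ?thesis by simp
  qed
  have iB: "(B p has_integral Q p) {0..1}"
  proof -
    have "(B p has_integral (1 * Q (1 *\<^sub>R p) - 0 * Q (0 *\<^sub>R p))) {0..1}"
    proof (rule fundamental_theorem_of_calculus)
      fix t :: real
      have "((\<lambda>t. t * Q (t *\<^sub>R p)) has_derivative (\<lambda>h. t * (h * (fst p * pdx Q (t *\<^sub>R p) + snd p * pdy Q (t *\<^sub>R p))) + h * Q (t *\<^sub>R p))) (at t within {0..1})"
        by (intro has_derivative_mult has_derivative_ident line_comp[OF dQ])
      then show "((\<lambda>t. t * Q (t *\<^sub>R p)) has_vector_derivative B p t) (at t within {0..1})"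
        unfolding has_vector_derivative_def
        by (rule has_derivative_eq_rhs) (auto simp: B_def algebra_simps cl)
    qed simp
    then show ?thesis by simp
  qed
  have ap: "blinfun_apply (integral (cbox 0 1) (fx p)) v = fst v * P p + snd v * Q p" for v
  proof -
    have "blinfun_apply (integral (cbox 0 1) (fx p)) v = integral {0..1} (\<lambda>t. fst v * A p t + snd v * B p t)"
      by (subst blinfun_apply_integral) (auto intro!: integrable_continuous_interval cfx1 simp: fxa)
    also have "\<dots> = fst v * P p + snd v * Q p"
      by (intro integral_unique has_integral_add has_integral_mult_right iA iB)
    finally show ?thesis .
  qed
  moreover have "Fp w = (\<lambda>p. integral (cbox 0 1) (f p))"
    by (auto simp: Fp_def f_def P_def Q_def)
  moreover have "blinfun_apply (integral (cbox 0 1) (fx p)) = (\<lambda>v. fst v * fst (w p) + snd v * snd (w p))"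
    using ap by (intro ext) (simp add: P_def Q_def)
  ultimately show ?thesis using L by simp
qed

lemma shift_int:
  fixes h :: "real \<Rightarrow> 'a"
  assumes "\<And>x. h (x + 1) = h x"
  shows "h (x + of_int m) = h x"
proof (induction m rule: int_induct[where k=0])
  case base then show ?case by simp
next
  case (step1 i)
  have "h (x + of_int (i + 1)) = h ((x + of_int i) + 1)" by (simp add: algebra_simps)
  also have "\<dots> = h x" using assms step1 by simp
  finally show ?case .
next
  case (step2 i)
  have "h (x + of_int (i - 1)) = h ((x + of_int (i - 1)) + 1)" by (rule assms[symmetric])
  also have "\<dots> = h (x + of_int i)" by (simp add: algebra_simps)
  finally show ?case using step2 by simp
qed

lemma decomp:
  assumes cf: "closed_form w"
  obtains c1 c2 G where "periodic G" "smooth_fun G"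
    "\<And>p. (G has_derivative (\<lambda>v. fst v * (fst (w p) - c1) + snd v * (snd (w p) - c2))) (at p)"
    "\<And>k. period w k = c1 * of_int (fst k) + c2 * of_int (snd k)"
    "exact_form w \<or> (c1, c2) \<noteq> (0, 0)"
proof -
  define F where "F = Fp w"
  define P where "P = (\<lambda>q. fst (w q))"
  define Q where "Q = (\<lambda>q. snd (w q))"
  have sP: "smooth_fun P" and sQ: "smooth_fun Q" and pw: "periodic w"
    using cf by (auto simp: closed_form_def smooth_field_def P_def Q_def)
  have dF: "(F has_derivative (\<lambda>v. fst v * P p + snd v * Q p)) (at p)" for p
    unfolding F_def P_def Q_def by (rule Fp_deriv[OF cf])
  have F0: "F 0 = 0" by (simp add: F_def Fp_def)
  have shift: "F (p + (of_int m, of_int n)) = F p + F (of_int m, of_int n)" for p m n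
  proof -
    define s :: pt where "s = (of_int m, of_int n)"
    have ws: "w (q + s) = w q" for q
      using pw unfolding periodic_def s_def
      by (metis add_Pair prod.collapse)
    have "((\<lambda>p. F (p + s) - F p) has_derivative (\<lambda>h. 0)) (at p within UNIV)" for p
    proof -
      have "((\<lambda>p. F (p + s)) has_derivative (\<lambda>v. fst v * P (p + s) + snd v * Q (p + s))) (at p)"
        using has_derivative_compose[OF has_derivative_add[OF has_derivative_ident has_derivative_const] dF]
        by simp
      from has_derivative_diff[OF this dF]
      show ?thesis by (simp add: P_def Q_def ws)
    qed
    then obtain c where "\<And>x. F (x + s) - F x = c"
      using has_derivative_zero_constant[of UNIV "\<lambda>p. F (p + s) - F p"] by auto
    from this[of p] this[of 0] show ?thesis by (simp add: F0 s_def)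
  qed
  define c1 where "c1 = F (1, 0)"
  define c2 where "c2 = F (0, 1)"
  define G where "G = (\<lambda>p. F p - c1 * fst p - c2 * snd p)"
  have dG: "(G has_derivative (\<lambda>v. fst v * (fst (w p) - c1) + snd v * (snd (w p) - c2))) (at p)" for p
  proof -
    have "(G has_derivative (\<lambda>v. (fst v * P p + snd v * Q p) - c1 * fst v - c2 * snd v)) (at p)"
      unfolding G_def
      by (intro has_derivative_diff dF has_derivative_mult_right has_derivative_fst has_derivative_snd has_derivative_ident)
    then show ?thesis by (rule has_derivative_eq_rhs) (auto simp: P_def Q_def algebra_simps)
  qed
  have Gx: "G (x + 1, y) = G (x, y)" for x y
    using shift[of "(x,y)" 1 0] by (simp add: G_def c1_def algebra_simps)
  have Gy: "G (x, y + 1) = G (x, y)" for x y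
    using shift[of "(x,y)" 0 1] by (simp add: G_def c2_def algebra_simps)
  have perG: "periodic G"
    unfolding periodic_def
  proof (intro allI)
    fix x y m n
    have "G (x + of_int m, y + of_int n) = G (x + of_int m, y)"
      by (rule shift_int[where h="\<lambda>y. G (x + of_int m, y)"]) (rule Gy)
    also have "\<dots> = G (x, y)"
      by (rule shift_int[where h="\<lambda>x. G (x, y)"]) (rule Gx)
    finally show "G (x + of_int m, y + of_int n) = G (x, y)" .
  qed
  have fdG: "frechet_derivative G (at p) v = fst v * P p + snd v * Q p + (- (fst v * c1 + snd v * c2))" for p v
    unfolding frechet_derivative_at[OF dG[of p], symmetric] by (simp add: P_def Q_def algebra_simps)
  have smG: "smooth_fun G"
    unfolding smooth_fun_def
  proof
    fix n show "Ck n G"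
    proof (cases n)
      case 0
      have "continuous_on UNIV G"
        using dG by (intro continuous_at_imp_continuous_on) (auto intro: has_derivative_continuous)
      then show ?thesis using 0 by simp
    next
      case (Suc k)
      have "Ck k (\<lambda>p. frechet_derivative G (at p) v)" for v
        unfolding fdG by (rule Ck_affine) (use sP sQ in \<open>auto simp: smooth_fun_def\<close>)
      then show ?thesis using Suc dG by (auto simp: differentiable_def) blast
    qed
  qed
  have per: "period w k = c1 * of_int (fst k) + c2 * of_int (snd k)" for k
  proof -
    have "period w k = F (of_int (fst k), of_int (snd k))"
      by (simp add: period_def F_def Fp_def algebra_simps)
    also have "\<dots> = G (of_int (fst k), of_int (snd k)) + c1 * of_int (fst k) + c2 * of_int (snd k)"
      by (simp add: G_def)
    also have "G (of_int (fst k), of_int (snd k)) = G (0 + of_int (fst k), 0 + of_int (snd k))" by simp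
    also have "\<dots> = G (0, 0)" using perG unfolding periodic_def by blast
    also have "\<dots> = 0" using F0 by (simp add: G_def zero_prod_def)
    finally show ?thesis by simp
  qed
  have "exact_form w \<or> (c1, c2) \<noteq> (0, 0)"
  proof (cases "(c1, c2) = (0, 0)")
    case True
    have "pdx G p = fst (w p) \<and> pdy G p = snd (w p)" for p
      using True by (simp add: pdx_def pdy_def fdG P_def Q_def)
    then have "exact_form w" unfolding exact_form_def using perG smG by blast
    then show ?thesis by blast
  qed simp
  then show ?thesis using that perG smG dG per by blast
qed

lemma partial_x:
  assumes "(h has_derivative (\<lambda>v. fst v * a + snd v * b)) (at (x, y))"
  shows "((\<lambda>x. h (x, y)) has_vector_derivative a) (at x within T)"
proof -
  have "((\<lambda>x. (x, y)) has_derivative (\<lambda>u. (u, 0))) (at x within T)"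
    by (intro has_derivative_Pair has_derivative_ident has_derivative_const)
  from has_derivative_compose[OF this assms]
  show ?thesis unfolding has_vector_derivative_def by simp
qed

lemma partial_y:
  assumes "(h has_derivative (\<lambda>v. fst v * a + snd v * b)) (at (x, y))"
  shows "((\<lambda>y. h (x, y)) has_vector_derivative b) (at y within T)"
proof -
  have "((\<lambda>y. (x, y)) has_derivative (\<lambda>u. (0, u))) (at y within T)"
    by (intro has_derivative_Pair has_derivative_ident has_derivative_const)
  from has_derivative_compose[OF this assms]
  show ?thesis unfolding has_vector_derivative_def by simp
qed

lemma prod_deriv:
  fixes h1 h2 :: "pt \<Rightarrow> real"
  assumes "(h1 has_derivative (\<lambda>v. fst v * a1 + snd v * b1)) (at p)"
    "(h2 has_derivative (\<lambda>v. fst v * a2 + snd v * b2)) (at p)"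
  shows "((\<lambda>q. h1 q * h2 q) has_derivative
     (\<lambda>v. fst v * (h1 p * a2 + a1 * h2 p) + snd v * (h1 p * b2 + b1 * h2 p))) (at p)"
  using has_derivative_mult[OF assms] by (rule has_derivative_eq_rhs) (auto simp: algebra_simps)

lemma add_lin_deriv:
  fixes h :: "pt \<Rightarrow> real"
  assumes "(h has_derivative (\<lambda>v. fst v * (a - c1) + snd v * (b - c2))) (at p)"
  shows "((\<lambda>q. c1 * fst q + c2 * snd q + h q) has_derivative (\<lambda>v. fst v * a + snd v * b)) (at p)"
proof -
  have "((\<lambda>q. c1 * fst q + c2 * snd q + h q) has_derivative (\<lambda>v. c1 * fst v + c2 * snd v + (fst v * (a - c1) + snd v * (b - c2)))) (at p)"
    by (intro has_derivative_add has_derivative_mult_right[OF has_derivative_fst[OF has_derivative_ident]]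
        has_derivative_mult_right[OF has_derivative_snd[OF has_derivative_ident]] assms)
  then show ?thesis by (rule has_derivative_eq_rhs) (auto simp: algebra_simps)
qed

lemma cup_zero:
  assumes cfw: "closed_form w" and cfe: "closed_form e"
  and df: "\<And>p. (f has_derivative (\<lambda>v. fst v * (fst (w p) - c1) + snd v * (snd (w p) - c2))) (at p)"
  and pf: "periodic f"
  and dg: "\<And>p. (g has_derivative (\<lambda>v. fst v * (fst (e p) - d1) + snd v * (snd (e p) - d2))) (at p)"
  and pg: "periodic g"
  and par: "\<And>p. fst (w p) * snd (e p) - snd (w p) * fst (e p) = 0"
  shows "c1 * d2 - c2 * d1 = 0"
proof -
  define P where "P = (\<lambda>q. fst (w q))"
  define Q where "Q = (\<lambda>q. snd (w q))"
  define R where "R = (\<lambda>q. fst (e q))"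
  define S where "S = (\<lambda>q. snd (e q))"
  have sP: "smooth_fun P" and sQ: "smooth_fun Q" and cl: "\<And>q. pdy P q = pdx Q q" and pw: "periodic w"
    using cfw by (auto simp: closed_form_def smooth_field_def P_def Q_def)
  have sR: "smooth_fun R" and sS: "smooth_fun S"
    using cfe by (auto simp: closed_form_def smooth_field_def R_def S_def)
  note dP = smooth_has_deriv2[OF sP] and dQ = smooth_has_deriv2[OF sQ]
  have dg': "(g has_derivative (\<lambda>v. fst v * (R p - d1) + snd v * (S p - d2))) (at p)" for p
    using dg by (simp add: R_def S_def)
  have dfP: "((\<lambda>q. c1 * fst q + c2 * snd q + f q) has_derivative (\<lambda>v. fst v * P p + snd v * Q p)) (at p)" for p
    by (rule add_lin_deriv) (use df in \<open>simp add: P_def Q_def\<close>)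
  define Xf where "Xf = (\<lambda>p. Q p * (R p - d1) + pdx Q p * g p)"
  define Yf where "Yf = (\<lambda>p. P p * (S p - d2) + pdy P p * g p)"
  define H where "H = (\<lambda>p. d1 * Q p - Yf p)"
  have H2: "H p = d2 * P p - Xf p" for p
    using par[of p] cl[of p] by (simp add: H_def Xf_def Yf_def P_def Q_def R_def S_def algebra_simps)
  have dQg: "((\<lambda>q. Q q * g q) has_derivative (\<lambda>v. fst v * Xf p + snd v * (Q p * (S p - d2) + pdy Q p * g p))) (at p)" for p
    unfolding Xf_def by (rule prod_deriv[OF dQ dg'])
  have dPg: "((\<lambda>q. P q * g q) has_derivative (\<lambda>v. fst v * (P p * (R p - d1) + pdx P p * g p) + snd v * Yf p)) (at p)" for p
    unfolding Yf_def by (rule prod_deriv[OF dP dg'])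
  have fx1: "f (1, y) = f (0, y)" for y
    using pf unfolding periodic_def by (metis add_0 add_0_right of_int_0 of_int_1)
  have fy1: "f (x, 1) = f (x, 0)" for x
    using pf unfolding periodic_def by (metis add_0 add_0_right of_int_0 of_int_1)
  have gx1: "g (1, y) = g (0, y)" for y
    using pg unfolding periodic_def by (metis add_0 add_0_right of_int_0 of_int_1)
  have gy1: "g (x, 1) = g (x, 0)" for x
    using pg unfolding periodic_def by (metis add_0 add_0_right of_int_0 of_int_1)
  have wx1: "w (1, y) = w (0, y)" for y
    using pw unfolding periodic_def by (metis add_0 add_0_right of_int_0 of_int_1)
  have wy1: "w (x, 1) = w (x, 0)" for x
    using pw unfolding periodic_def by (metis add_0 add_0_right of_int_0 of_int_1)
  have ia: "((\<lambda>x. H (x, y)) has_integral d2 * c1) {0..1}" for y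
  proof -
    have i1: "((\<lambda>x. P (x, y)) has_integral c1) {0..1}"
    proof -
      have "((\<lambda>x. P (x, y)) has_integral ((c1 * 1 + c2 * y + f (1, y)) - (c1 * 0 + c2 * y + f (0, y)))) {0..1}"
        using partial_x[OF dfP, where y=y and T="{0..1}"] by (intro fundamental_theorem_of_calculus) auto
      then show ?thesis by (simp add: fx1)
    qed
    have i2: "((\<lambda>x. Xf (x, y)) has_integral 0) {0..1}"
    proof -
      have "((\<lambda>x. Xf (x, y)) has_integral (Q (1, y) * g (1, y) - Q (0, y) * g (0, y))) {0..1}"
        using partial_x[OF dQg, where y=y and T="{0..1}"] by (intro fundamental_theorem_of_calculus) auto
      then show ?thesis by (simp add: gx1 wx1 Q_def)
    qed
    show ?thesis unfolding H2 using has_integral_diff[OF has_integral_mult_right[OF i1, of d2] i2]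
      by (simp add: algebra_simps)
  qed
  have ib: "((\<lambda>y. H (x, y)) has_integral d1 * c2) {0..1}" for x
  proof -
    have i1: "((\<lambda>y. Q (x, y)) has_integral c2) {0..1}"
    proof -
      have "((\<lambda>y. Q (x, y)) has_integral ((c1 * x + c2 * 1 + f (x, 1)) - (c1 * x + c2 * 0 + f (x, 0)))) {0..1}"
        using partial_y[OF dfP, where x=x and T="{0..1}"] by (intro fundamental_theorem_of_calculus) auto
      then show ?thesis by (simp add: fy1)
    qed
    have i2: "((\<lambda>y. Yf (x, y)) has_integral 0) {0..1}"
    proof -
      have "((\<lambda>y. Yf (x, y)) has_integral (P (x, 1) * g (x, 1) - P (x, 0) * g (x, 0))) {0..1}"
        using partial_y[OF dPg, where x=x and T="{0..1}"] by (intro fundamental_theorem_of_calculus) auto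
      then show ?thesis by (simp add: gy1 wy1 P_def)
    qed
    show ?thesis unfolding H_def using has_integral_diff[OF has_integral_mult_right[OF i1, of d1] i2]
      by (simp add: algebra_simps)
  qed
  have cg: "continuous_on UNIV g"
    using dg by (intro continuous_at_imp_continuous_on) (auto intro: has_derivative_continuous)
  have cH: "continuous_on UNIV H"
    unfolding H_def Yf_def
    by (intro continuous_intros smooth_cont sQ sP sS smooth_pdy_cont cg)
  have "integral (cbox 0 1) (\<lambda>x. integral (cbox 0 1) (\<lambda>y. H (x, y))) =
        integral (cbox 0 1) (\<lambda>y. integral (cbox 0 1) (\<lambda>x. H (x, y)))"
    by (rule integral_swap_continuous) (auto intro: continuous_on_subset[OF cH] simp: split_beta')
  moreover have "integral (cbox 0 1) (\<lambda>x. integral (cbox 0 1) (\<lambda>y. H (x, y))) = d1 * c2"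
    by (simp add: integral_unique[OF ib])
  moreover have "integral (cbox 0 1) (\<lambda>y. integral (cbox 0 1) (\<lambda>x. H (x, y))) = d2 * c1"
    by (simp add: integral_unique[OF ia])
  ultimately show ?thesis by (simp add: algebra_simps)
qed

lemma dioph_scale:
  assumes "diophantine (u1, u2)" "\<mu> \<noteq> 0"
  shows "diophantine (\<mu> * u1, \<mu> * u2)"
proof -
  obtain \<gamma> \<tau> where g: "\<gamma> > 0" "\<tau> > 1" and H: "\<And>k1 k2. (k1, k2) \<noteq> (0, 0) \<Longrightarrow>
      \<bar>u1 * of_int k1 + u2 * of_int k2\<bar> \<ge> \<gamma> * norm (real_of_int k1, real_of_int k2) powr (-\<tau>)"
    using assms(1) unfolding diophantine_def by auto
  have pos: "\<bar>\<mu>\<bar> * \<gamma> > 0" using g assms(2) by simp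
  have B: "\<forall>k1 k2. (k1, k2) \<noteq> (0, 0) \<longrightarrow> \<bar>\<mu>\<bar> * \<gamma> * norm (real_of_int k1, real_of_int k2) powr (-\<tau>) \<le> \<bar>\<mu> * u1 * of_int k1 + \<mu> * u2 * of_int k2\<bar>"
  proof (intro allI impI)
    fix k1 k2 :: int assume "(k1, k2) \<noteq> (0, 0)"
    from H[OF this] have "\<bar>\<mu>\<bar> * (\<gamma> * norm (real_of_int k1, real_of_int k2) powr (-\<tau>)) \<le> \<bar>\<mu>\<bar> * \<bar>u1 * of_int k1 + u2 * of_int k2\<bar>"
      by (intro mult_left_mono) auto
    also have "\<dots> = \<bar>\<mu> * u1 * of_int k1 + \<mu> * u2 * of_int k2\<bar>"
      by (subst abs_mult[symmetric]) (simp add: algebra_simps)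
    finally show "\<bar>\<mu>\<bar> * \<gamma> * norm (real_of_int k1, real_of_int k2) powr (-\<tau>) \<le> \<bar>\<mu> * u1 * of_int k1 + \<mu> * u2 * of_int k2\<bar>"
      by (simp add: mult.assoc)
  qed
  show ?thesis unfolding diophantine_def fst_conv snd_conv using pos g(2) B by blast
qed

lemma dioph_scale_iff:
  assumes "\<mu> \<noteq> 0"
  shows "diophantine (\<mu> * u1, \<mu> * u2) \<longleftrightarrow> diophantine (u1, u2)"
  using dioph_scale[OF _ assms] dioph_scale[of "\<mu> * u1" "\<mu> * u2" "1 / \<mu>"] assms by auto

lemma norm_lin_bound:
  fixes a b e f :: int
  shows "norm (real_of_int (a * k1 + b * k2), real_of_int (e * k1 + f * k2))
    \<le> (\<bar>a\<bar> + \<bar>b\<bar> + \<bar>e\<bar> + \<bar>f\<bar>) * norm (real_of_int k1, real_of_int k2)"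
proof -
  define N where "N = norm (real_of_int k1, real_of_int k2)"
  have n1: "\<bar>real_of_int k1\<bar> \<le> N" unfolding N_def using norm_fst_le[of "real_of_int k1"] by simp
  have n2: "\<bar>real_of_int k2\<bar> \<le> N" unfolding N_def using norm_snd_le[of "real_of_int k2"] by simp
  have le: "norm (x, y) \<le> \<bar>x\<bar> + \<bar>y\<bar>" for x y :: real
    using norm_Pair_le[of x y] by simp
  have t1: "\<bar>real_of_int a * real_of_int k1 + real_of_int b * real_of_int k2\<bar> \<le> (\<bar>real_of_int a\<bar> + \<bar>real_of_int b\<bar>) * N"
  proof -
    have "\<bar>real_of_int a * real_of_int k1 + real_of_int b * real_of_int k2\<bar> \<le> \<bar>real_of_int a\<bar> * \<bar>real_of_int k1\<bar> + \<bar>real_of_int b\<bar> * \<bar>real_of_int k2\<bar>"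
      by (metis abs_mult abs_triangle_ineq)
    also have "\<dots> \<le> \<bar>real_of_int a\<bar> * N + \<bar>real_of_int b\<bar> * N"
      by (intro add_mono mult_left_mono n1 n2) auto
    finally show ?thesis by (simp add: algebra_simps)
  qed
  have t2: "\<bar>real_of_int e * real_of_int k1 + real_of_int f * real_of_int k2\<bar> \<le> (\<bar>real_of_int e\<bar> + \<bar>real_of_int f\<bar>) * N"
  proof -
    have "\<bar>real_of_int e * real_of_int k1 + real_of_int f * real_of_int k2\<bar> \<le> \<bar>real_of_int e\<bar> * \<bar>real_of_int k1\<bar> + \<bar>real_of_int f\<bar> * \<bar>real_of_int k2\<bar>"
      by (metis abs_mult abs_triangle_ineq)
    also have "\<dots> \<le> \<bar>real_of_int e\<bar> * N + \<bar>real_of_int f\<bar> * N"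
      by (intro add_mono mult_left_mono n1 n2) auto
    finally show ?thesis by (simp add: algebra_simps)
  qed
  have "norm (real_of_int (a * k1 + b * k2), real_of_int (e * k1 + f * k2)) \<le>
      \<bar>real_of_int a * real_of_int k1 + real_of_int b * real_of_int k2\<bar> + \<bar>real_of_int e * real_of_int k1 + real_of_int f * real_of_int k2\<bar>"
    using le by simp
  also have "\<dots> \<le> (\<bar>a\<bar> + \<bar>b\<bar> + \<bar>e\<bar> + \<bar>f\<bar>) * N" using t1 t2 by (simp add: algebra_simps)
  finally show ?thesis unfolding N_def .
qed

lemma dioph_lin:
  fixes a b e f :: int
  assumes "diophantine (u1, u2)" "a * f - b * e \<noteq> 0"
  shows "diophantine (u1 * of_int a + u2 * of_int e, u1 * of_int b + u2 * of_int f)"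
proof -
  obtain \<gamma> \<tau> where g: "\<gamma> > 0" "\<tau> > 1" and H: "\<And>k1 k2. (k1, k2) \<noteq> (0, 0) \<Longrightarrow>
      \<bar>u1 * of_int k1 + u2 * of_int k2\<bar> \<ge> \<gamma> * norm (real_of_int k1, real_of_int k2) powr (-\<tau>)"
    using assms(1) unfolding diophantine_def by auto
  define K :: real where "K = \<bar>a\<bar> + \<bar>b\<bar> + \<bar>e\<bar> + \<bar>f\<bar>"
  have K: "K > 0" unfolding K_def using assms(2) by (cases "a = 0"; cases "b = 0") auto
  have pos: "\<gamma> * K powr (-\<tau>) > 0" using g K by simp
  have B: "\<forall>k1 k2. (k1, k2) \<noteq> (0, 0) \<longrightarrow> \<gamma> * K powr (-\<tau>) * norm (real_of_int k1, real_of_int k2) powr (-\<tau>) \<le>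
       \<bar>(u1 * of_int a + u2 * of_int e) * of_int k1 + (u1 * of_int b + u2 * of_int f) * of_int k2\<bar>"
  proof (intro allI impI)
    fix k1 k2 :: int assume k: "(k1, k2) \<noteq> (0, 0)"
    define m1 where "m1 = a * k1 + b * k2"
    define m2 where "m2 = e * k1 + f * k2"
    have m: "(m1, m2) \<noteq> (0, 0)"
    proof
      assume "(m1, m2) = (0, 0)"
      then have z1: "a * k1 + b * k2 = 0" and z2: "e * k1 + f * k2 = 0" unfolding m1_def m2_def by simp_all
      have "(a * f - b * e) * k1 = f * (a * k1 + b * k2) - b * (e * k1 + f * k2)" by (simp add: algebra_simps)
      moreover have "(a * f - b * e) * k2 = a * (e * k1 + f * k2) - e * (a * k1 + b * k2)" by (simp add: algebra_simps)
      ultimately have "(a * f - b * e) * k1 = 0" "(a * f - b * e) * k2 = 0" using z1 z2 by simp_all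
      then show False using k assms(2) by simp
    qed
    have N0: "norm (real_of_int m1, real_of_int m2) > 0" using m by (simp add: zero_prod_def)
    have Nle: "norm (real_of_int m1, real_of_int m2) \<le> K * norm (real_of_int k1, real_of_int k2)"
      unfolding m1_def m2_def K_def by (rule norm_lin_bound)
    have "\<gamma> * K powr (-\<tau>) * norm (real_of_int k1, real_of_int k2) powr (-\<tau>)
        = \<gamma> * (K * norm (real_of_int k1, real_of_int k2)) powr (-\<tau>)"
      by (simp add: powr_mult)
    also have "\<dots> \<le> \<gamma> * norm (real_of_int m1, real_of_int m2) powr (-\<tau>)"
      using g by (intro mult_left_mono powr_mono2' N0 Nle) auto
    also have "\<dots> \<le> \<bar>u1 * of_int m1 + u2 * of_int m2\<bar>" by (rule H[OF m])
    also have "\<dots> = \<bar>(u1 * of_int a + u2 * of_int e) * of_int k1 + (u1 * of_int b + u2 * of_int f) * of_int k2\<bar>"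
      by (simp add: m1_def m2_def algebra_simps)
    finally show "\<gamma> * K powr (-\<tau>) * norm (real_of_int k1, real_of_int k2) powr (-\<tau>) \<le>
       \<bar>(u1 * of_int a + u2 * of_int e) * of_int k1 + (u1 * of_int b + u2 * of_int f) * of_int k2\<bar>" .
  qed
  show ?thesis unfolding diophantine_def fst_conv snd_conv using pos g(2) B by blast
qed

lemma dioph_lin_iff:
  fixes a b e f :: int
  assumes D: "\<bar>a * f - b * e\<bar> = 1"
  shows "diophantine (u1 * of_int a + u2 * of_int e, u1 * of_int b + u2 * of_int f) \<longleftrightarrow> diophantine (u1, u2)"
proof
  assume "diophantine (u1, u2)"
  then show "diophantine (u1 * of_int a + u2 * of_int e, u1 * of_int b + u2 * of_int f)"
  proof -
    have "a * f - b * e \<noteq> 0" using D by auto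
    then show ?thesis using dioph_lin[where a=a and b=b and e=e and f=f] \<open>diophantine (u1, u2)\<close> by blast
  qed
next
  define d where "d = a * f - b * e"
  have d1: "d = 1 \<or> d = -1" using D unfolding d_def by linarith
  have dd: "d * d = 1" using d1 by auto
  have rdd: "real_of_int d * real_of_int d = 1" using d1 by auto
  assume A: "diophantine (u1 * of_int a + u2 * of_int e, u1 * of_int b + u2 * of_int f)"
  have "(d * f) * (d * a) - (- d * b) * (- d * e) \<noteq> 0"
  proof -
    have "(d * f) * (d * a) - (- d * b) * (- d * e) = (d * d) * d" by (simp add: d_def algebra_simps)
    then show ?thesis using d1 by auto
  qed
  from dioph_lin[OF A this]
  have "diophantine ((u1 * of_int a + u2 * of_int e) * of_int (d * f) + (u1 * of_int b + u2 * of_int f) * of_int (- d * e),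
     (u1 * of_int a + u2 * of_int e) * of_int (- d * b) + (u1 * of_int b + u2 * of_int f) * of_int (d * a))" .
  moreover have "(u1 * of_int a + u2 * of_int e) * of_int (d * f) + (u1 * of_int b + u2 * of_int f) * of_int (- d * e)
      = u1 * (real_of_int d * real_of_int (a * f - b * e))"
    by (simp add: algebra_simps)
  moreover have "(u1 * of_int a + u2 * of_int e) * of_int (- d * b) + (u1 * of_int b + u2 * of_int f) * of_int (d * a)
      = u2 * (real_of_int d * real_of_int (a * f - b * e))"
    by (simp add: algebra_simps)
  moreover have dR: "real_of_int (a * f - b * e) = real_of_int d" by (simp add: d_def)
  ultimately show "diophantine (u1, u2)" by (simp only: dR rdd mult_1_right)
qed

lemma par_lemma:
  assumes cw: "closed_form w" and ce: "closed_form e" and dense: "closure {p. X p \<noteq> 0} = UNIV"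
    and aw: "annihilates w X" and ae: "annihilates e X"
  shows "fst (w p) * snd (e p) - snd (w p) * fst (e p) = 0"
proof -
  define Z where "Z = {p. fst (w p) * snd (e p) - snd (w p) * fst (e p) = 0}"
  have c: "continuous_on UNIV (\<lambda>p. fst (w p) * snd (e p) - snd (w p) * fst (e p))"
    using cw ce unfolding closed_form_def smooth_field_def
    by (intro continuous_intros smooth_cont) auto
  have "closed Z" unfolding Z_def
    using continuous_closed_preimage_constant[OF c closed_UNIV, of 0] by simp
  moreover have "{p. X p \<noteq> 0} \<subseteq> Z"
  proof
    fix p assume "p \<in> {p. X p \<noteq> 0}"
    then have X0: "fst (X p) \<noteq> 0 \<or> snd (X p) \<noteq> 0" by (auto simp: prod_eq_iff)
    define o1 where "o1 = fst (w p)" define o2 where "o2 = snd (w p)"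
    define e1 where "e1 = fst (e p)" define e2 where "e2 = snd (e p)"
    define x1 where "x1 = fst (X p)" define x2 where "x2 = snd (X p)"
    have h1: "o1 * x1 + o2 * x2 = 0" using aw unfolding annihilates_def o1_def o2_def x1_def x2_def by blast
    have h2: "e1 * x1 + e2 * x2 = 0" using ae unfolding annihilates_def e1_def e2_def x1_def x2_def by blast
    have "(o1 * e2 - o2 * e1) * x1 = e2 * (o1 * x1 + o2 * x2) - o2 * (e1 * x1 + e2 * x2)" by (simp add: algebra_simps)
    then have z1: "(o1 * e2 - o2 * e1) * x1 = 0" using h1 h2 by simp
    have "(o1 * e2 - o2 * e1) * x2 = o1 * (e1 * x1 + e2 * x2) - e1 * (o1 * x1 + o2 * x2)" by (simp add: algebra_simps)
    then have z2: "(o1 * e2 - o2 * e1) * x2 = 0" using h1 h2 by simp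
    have "o1 * e2 - o2 * e1 = 0" using z1 z2 X0 unfolding x1_def x2_def by auto
    then show "p \<in> Z" by (simp add: Z_def o1_def o2_def e1_def e2_def)
  qed
  ultimately have "closure {p. X p \<noteq> 0} \<subseteq> Z" by (rule closure_minimal[rotated])
  then show ?thesis using dense by (auto simp: Z_def)
qed

lemma vec_nonzero:
  assumes hg: "hom_generators g1 g2" and c: "(c1, c2) \<noteq> (0, 0)"
  shows "(- (c1 * of_int (fst g2) + c2 * of_int (snd g2)), c1 * of_int (fst g1) + c2 * of_int (snd g1)) \<noteq> (0::real\<times>real)"
proof
  define a1 :: real where "a1 = of_int (fst g1)" define a2 :: real where "a2 = of_int (snd g1)"
  define b1 :: real where "b1 = of_int (fst g2)" define b2 :: real where "b2 = of_int (snd g2)"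
  have D: "a1 * b2 - a2 * b1 \<noteq> 0"
  proof -
    have "\<bar>fst g1 * snd g2 - snd g1 * fst g2\<bar> = 1" using hg by (simp add: hom_generators_def)
    then have "fst g1 * snd g2 - snd g1 * fst g2 \<noteq> 0" by auto
    then have "real_of_int (fst g1 * snd g2 - snd g1 * fst g2) \<noteq> 0" by (simp only: of_int_eq_0_iff not_False_eq_True)
    then show ?thesis unfolding a1_def a2_def b1_def b2_def by (simp only: of_int_mult of_int_diff not_False_eq_True)
  qed
  assume "(- (c1 * of_int (fst g2) + c2 * of_int (snd g2)), c1 * of_int (fst g1) + c2 * of_int (snd g1)) = (0::real\<times>real)"
  then have A: "c1 * a1 + c2 * a2 = 0" and B: "c1 * b1 + c2 * b2 = 0"
    by (auto simp: a1_def a2_def b1_def b2_def zero_prod_def)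
  have "c1 * (a1 * b2 - a2 * b1) = b2 * (c1 * a1 + c2 * a2) - a2 * (c1 * b1 + c2 * b2)" by (simp add: algebra_simps)
  then have "c1 = 0" using A B D by simp
  moreover have "c2 * (a1 * b2 - a2 * b1) = a1 * (c1 * b1 + c2 * b2) - b1 * (c1 * a1 + c2 * a2)" by (simp add: algebra_simps)
  then have "c2 = 0" using A B D by simp
  ultimately show False using c by simp
qed

lemma per_dioph:
  assumes hg: "hom_generators g1 g2"
    and per: "\<And>k. period w k = c1 * of_int (fst k) + c2 * of_int (snd k)"
  shows "diophantine (- period w g2, period w g1) \<longleftrightarrow> diophantine (c1, c2)"
proof -
  have eq: "(- period w g2, period w g1) =
    (c1 * of_int (- fst g2) + c2 * of_int (- snd g2), c1 * of_int (fst g1) + c2 * of_int (snd g1))"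
    by (simp add: per)
  have "\<bar>(- fst g2) * snd g1 - fst g1 * (- snd g2)\<bar> = 1"
    using hg by (simp add: hom_generators_def algebra_simps)
  then show ?thesis unfolding eq
    by (rule dioph_lin_iff[where a="- fst g2" and b="fst g1" and e="- snd g2" and f="snd g1"])
qed

lemma prop_pair:
  assumes "c1 * d2 - c2 * d1 = 0" "(d1, d2) \<noteq> (0::real, 0::real)"
  obtains l where "c1 = l * d1" "c2 = l * d2"
proof (cases "d1 = 0")
  case True
  then have "d2 \<noteq> 0" using assms(2) by simp
  moreover have "c1 * d2 = 0" using assms(1) True by simp
  ultimately have "c1 = 0" by simp
  then show ?thesis using that[of "c2 / d2"] True \<open>d2 \<noteq> 0\<close> by simp
next
  case False
  have "c2 = c1 / d1 * d2"
    using assms(1) False by (simp add: field_simps)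
  then show ?thesis using that[of "c1 / d1"] False by simp
qed

theorem proposition10:
  shows "(\<forall>\<omega>0. closed_form \<omega>0 \<and> (\<forall>p. \<omega>0 p \<noteq> 0) \<longrightarrow> \<not> exact_form \<omega>0) \<and>
    (\<forall>X \<omega> \<eta> g1 g2. smooth_field X \<and> closure {p. X p \<noteq> 0} = UNIV \<and>
        hom_generators g1 g2 \<and>
        closed_form \<omega> \<and> closed_form \<eta> \<and> \<not> exact_form \<omega> \<and> \<not> exact_form \<eta> \<and>
        annihilates \<omega> X \<and> annihilates \<eta> X \<longrightarrow>
        (- period \<omega> g2, period \<omega> g1) \<noteq> 0 \<and> (- period \<eta> g2, period \<eta> g1) \<noteq> 0 \<and>
        proj_eq (- period \<omega> g2, period \<omega> g1) (- period \<eta> g2, period \<eta> g1)) \<and>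
    (\<forall>X \<omega> \<eta> g1 g2 h1 h2. smooth_field X \<and> closure {p. X p \<noteq> 0} = UNIV \<and>
        hom_generators g1 g2 \<and> hom_generators h1 h2 \<and>
        closed_form \<omega> \<and> closed_form \<eta> \<and> \<not> exact_form \<omega> \<and> \<not> exact_form \<eta> \<and>
        annihilates \<omega> X \<and> annihilates \<eta> X \<longrightarrow>
        (diophantine (- period \<omega> g2, period \<omega> g1) \<longleftrightarrow>
         diophantine (- period \<eta> h2, period \<eta> h1)))"
proof -
  have P1: "\<forall>\<omega>0. closed_form \<omega>0 \<and> (\<forall>p. \<omega>0 p \<noteq> 0) \<longrightarrow> \<not> exact_form \<omega>0"
  proof (intro allI impI)
  fix \<omega>0 :: "pt \<Rightarrow> real \<times> real"
  assume "closed_form \<omega>0 \<and> (\<forall>p. \<omega>0 p \<noteq> 0)"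
  then show "\<not> exact_form \<omega>0" using part1 by blast
  qed
  have P2: "\<forall>X \<omega> \<eta> g1 g2. smooth_field X \<and> closure {p. X p \<noteq> 0} = UNIV \<and>
        hom_generators g1 g2 \<and>
        closed_form \<omega> \<and> closed_form \<eta> \<and> \<not> exact_form \<omega> \<and> \<not> exact_form \<eta> \<and>
        annihilates \<omega> X \<and> annihilates \<eta> X \<longrightarrow>
        (- period \<omega> g2, period \<omega> g1) \<noteq> 0 \<and> (- period \<eta> g2, period \<eta> g1) \<noteq> 0 \<and>
        proj_eq (- period \<omega> g2, period \<omega> g1) (- period \<eta> g2, period \<eta> g1)"
  proof (intro allI impI)
  fix X \<omega> \<eta> :: "pt \<Rightarrow> real \<times> real" and g1 g2 :: "int \<times> int"
  assume H: "smooth_field X \<and> closure {p. X p \<noteq> 0} = UNIV \<and>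
        hom_generators g1 g2 \<and>
        closed_form \<omega> \<and> closed_form \<eta> \<and> \<not> exact_form \<omega> \<and> \<not> exact_form \<eta> \<and>
        annihilates \<omega> X \<and> annihilates \<eta> X"
  then have cw: "closed_form \<omega>" and ce: "closed_form \<eta>" and hg: "hom_generators g1 g2" by auto
  obtain c1 c2 f where f: "periodic f" "smooth_fun f"
    "\<And>p. (f has_derivative (\<lambda>v. fst v * (fst (\<omega> p) - c1) + snd v * (snd (\<omega> p) - c2))) (at p)"
    "\<And>k. period \<omega> k = c1 * of_int (fst k) + c2 * of_int (snd k)"
    "exact_form \<omega> \<or> (c1, c2) \<noteq> (0, 0)"
    by (rule decomp[OF cw]) (rule that)
  obtain d1 d2 g where g: "periodic g" "smooth_fun g"
    "\<And>p. (g has_derivative (\<lambda>v. fst v * (fst (\<eta> p) - d1) + snd v * (snd (\<eta> p) - d2))) (at p)"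
    "\<And>k. period \<eta> k = d1 * of_int (fst k) + d2 * of_int (snd k)"
    "exact_form \<eta> \<or> (d1, d2) \<noteq> (0, 0)"
    by (rule decomp[OF ce]) (rule that)
  have c0: "(c1, c2) \<noteq> (0, 0)" and d0: "(d1, d2) \<noteq> (0, 0)" using f(5) g(5) H by auto
  have cup: "c1 * d2 - c2 * d1 = 0"
    by (rule cup_zero[OF cw ce f(3) f(1) g(3) g(1)]) (use par_lemma H in auto)
  obtain l where l: "c1 = l * d1" "c2 = l * d2" using prop_pair[OF cup d0] by blast
  have v0: "(- period \<omega> g2, period \<omega> g1) \<noteq> 0" using vec_nonzero[OF hg c0] by (simp add: f(4))
  have w0: "(- period \<eta> g2, period \<eta> g1) \<noteq> 0" using vec_nonzero[OF hg d0] by (simp add: g(4))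
  have "(- period \<omega> g2, period \<omega> g1) = l *\<^sub>R (- period \<eta> g2, period \<eta> g1)"
    by (simp add: f(4) g(4) l algebra_simps)
  then have "proj_eq (- period \<omega> g2, period \<omega> g1) (- period \<eta> g2, period \<eta> g1)"
    unfolding proj_eq_def using v0 w0 by blast
  then show "(- period \<omega> g2, period \<omega> g1) \<noteq> 0 \<and> (- period \<eta> g2, period \<eta> g1) \<noteq> 0 \<and>
        proj_eq (- period \<omega> g2, period \<omega> g1) (- period \<eta> g2, period \<eta> g1)" using v0 w0 by blast
  qed
  have P3: "\<forall>X \<omega> \<eta> g1 g2 h1 h2. smooth_field X \<and> closure {p. X p \<noteq> 0} = UNIV \<and>
        hom_generators g1 g2 \<and> hom_generators h1 h2 \<and>
        closed_form \<omega> \<and> closed_form \<eta> \<and> \<not> exact_form \<omega> \<and> \<not> exact_form \<eta> \<and>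
        annihilates \<omega> X \<and> annihilates \<eta> X \<longrightarrow>
        (diophantine (- period \<omega> g2, period \<omega> g1) \<longleftrightarrow>
         diophantine (- period \<eta> h2, period \<eta> h1))"
  proof (intro allI impI)
  fix X \<omega> \<eta> :: "pt \<Rightarrow> real \<times> real" and g1 g2 h1 h2 :: "int \<times> int"
  assume H: "smooth_field X \<and> closure {p. X p \<noteq> 0} = UNIV \<and>
        hom_generators g1 g2 \<and> hom_generators h1 h2 \<and>
        closed_form \<omega> \<and> closed_form \<eta> \<and> \<not> exact_form \<omega> \<and> \<not> exact_form \<eta> \<and>
        annihilates \<omega> X \<and> annihilates \<eta> X"
  then have cw: "closed_form \<omega>" and ce: "closed_form \<eta>" and hg: "hom_generators g1 g2"
    and hh: "hom_generators h1 h2" by auto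
  obtain c1 c2 f where f: "periodic f" "smooth_fun f"
    "\<And>p. (f has_derivative (\<lambda>v. fst v * (fst (\<omega> p) - c1) + snd v * (snd (\<omega> p) - c2))) (at p)"
    "\<And>k. period \<omega> k = c1 * of_int (fst k) + c2 * of_int (snd k)"
    "exact_form \<omega> \<or> (c1, c2) \<noteq> (0, 0)"
    by (rule decomp[OF cw]) (rule that)
  obtain d1 d2 g where g: "periodic g" "smooth_fun g"
    "\<And>p. (g has_derivative (\<lambda>v. fst v * (fst (\<eta> p) - d1) + snd v * (snd (\<eta> p) - d2))) (at p)"
    "\<And>k. period \<eta> k = d1 * of_int (fst k) + d2 * of_int (snd k)"
    "exact_form \<eta> \<or> (d1, d2) \<noteq> (0, 0)"
    by (rule decomp[OF ce]) (rule that)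
  have c0: "(c1, c2) \<noteq> (0, 0)" and d0: "(d1, d2) \<noteq> (0, 0)" using f(5) g(5) H by auto
  have cup: "c1 * d2 - c2 * d1 = 0"
    by (rule cup_zero[OF cw ce f(3) f(1) g(3) g(1)]) (use par_lemma H in auto)
  obtain l where l: "c1 = l * d1" "c2 = l * d2" using prop_pair[OF cup d0] by blast
  have l0: "l \<noteq> 0" using c0 l by auto
  have "diophantine (- period \<omega> g2, period \<omega> g1) \<longleftrightarrow> diophantine (c1, c2)"
    by (rule per_dioph[OF hg f(4)])
  also have "\<dots> \<longleftrightarrow> diophantine (d1, d2)" unfolding l by (rule dioph_scale_iff[OF l0])
  also have "\<dots> \<longleftrightarrow> diophantine (- period \<eta> h2, period \<eta> h1)"
    by (rule per_dioph[OF hh g(4), symmetric])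
  finally show "diophantine (- period \<omega> g2, period \<omega> g1) \<longleftrightarrow> diophantine (- period \<eta> h2, period \<eta> h1)" .
  qed
  show ?thesis using P1 P2 P3 by blast
qed

end
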